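(* For every constant $\alpha$ with $0<\alpha<1$ and every function $p=p(n)\ge n^{\alpha-1}$, asymptotically almost surely the random graph $G(n,p)$ is a $\sqrt[5]{np}$-expander.
   Context: $G(n,p)$ is the binomial random graph on $n$ vertices, each pair being an edge independently with probability $p$; asymptotically almost surely means with probability tending to $1$ as $n\to\infty$. For $A\subseteq V(G)$, $N(A)$ is the set of vertices outside $A$ with a neighbor in $A$. $G$ satisfies $S(s,g)$ if every $A$ with $|A|\le g$ has $|N(A)|\ge s|A|$; $G$ satisfies $L(l)$ if there is an edge between any two disjoint vertex sets of size at least $l$ each. An $n$-vertex graph is an $s$-expander if it satisfies $S\left(s,\frac{4n\ln s}{s\ln n}\right)$ and $L\left(\frac{n\ln s}{3000\ln n}\right)$. *)

theory Defs
  imports Complex_Main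
begin

text \<open>Graphs on the vertex set {0..<n}; an edge set is a set of 2-element vertex sets.\<close>

definition all_pairs :: "nat \<Rightarrow> nat set set" where
  "all_pairs n = {e. \<exists>u v. e = {u, v} \<and> u \<noteq> v \<and> u < n \<and> v < n}"

text \<open>Probability that the binomial random graph G(n,p) has property P:
  each of the pairs is an edge independently with probability p.\<close>

definition prob_Gnp :: "nat \<Rightarrow> real \<Rightarrow> (nat set set \<Rightarrow> bool) \<Rightarrow> real" where
  "prob_Gnp n p P =
     (\<Sum>E\<in>Pow (all_pairs n). if P E
        then p ^ card E * (1 - p) ^ (card (all_pairs n) - card E) else 0)"

definition nbhd :: "nat \<Rightarrow> nat set set \<Rightarrow> nat set \<Rightarrow> nat set" where
  "nbhd n E A = {v \<in> {0..<n} - A. \<exists>u\<in>A. {u, v} \<in> E}"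

definition prop_S :: "nat \<Rightarrow> nat set set \<Rightarrow> real \<Rightarrow> real \<Rightarrow> bool" where
  "prop_S n E s g \<longleftrightarrow>
     (\<forall>A. A \<subseteq> {0..<n} \<and> real (card A) \<le> g \<longrightarrow> real (card (nbhd n E A)) \<ge> s * real (card A))"

definition prop_L :: "nat \<Rightarrow> nat set set \<Rightarrow> real \<Rightarrow> bool" where
  "prop_L n E l \<longleftrightarrow>
     (\<forall>X Y. X \<subseteq> {0..<n} \<and> Y \<subseteq> {0..<n} \<and> X \<inter> Y = {} \<and>
            real (card X) \<ge> l \<and> real (card Y) \<ge> l \<longrightarrow> (\<exists>x\<in>X. \<exists>y\<in>Y. {x, y} \<in> E))"

definition is_expander :: "nat \<Rightarrow> nat set set \<Rightarrow> real \<Rightarrow> bool" where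
  "is_expander n E s \<longleftrightarrow>
     prop_S n E s (4 * real n * ln s / (s * ln (real n))) \<and>
     prop_L n E (real n * ln s / (3000 * ln (real n)))"

end

theory Submission
  imports Defs
begin

lemma sum_pow_binom:
  fixes p :: real
  assumes "finite S"
  shows "(\<Sum>E\<in>Pow S. p^card E * (1-p)^(card S - card E)) = 1"
proof -
  have "(\<Prod>x\<in>S. p + (1-p)) = (\<Sum>X\<in>Pow S. (\<Prod>x\<in>X. p) * (\<Prod>x\<in>S-X. 1-p))"
    by (rule prod_add[OF assms])
  also have "\<dots> = (\<Sum>E\<in>Pow S. p^card E * (1-p)^(card S - card E))"
  proof (rule sum.cong)
    fix X assume "X \<in> Pow S"
    then have "card (S - X) = card S - card X" using assms
      by (simp add: card_Diff_subset finite_subset)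
    then show "(\<Prod>x\<in>X. p) * (\<Prod>x\<in>S-X. 1-p) = p^card X * (1-p)^(card S - card X)"
      by simp
  qed simp
  finally show ?thesis by simp
qed

lemma finite_all_pairs: "finite (all_pairs n)"
proof -
  have "all_pairs n \<subseteq> Pow {0..<n}" unfolding all_pairs_def by auto
  then show ?thesis by (rule finite_subset) simp
qed

lemma prob_total: "prob_Gnp n p (\<lambda>_. True) = 1"
  unfolding prob_Gnp_def using sum_pow_binom[OF finite_all_pairs] by simp

lemma weight_nonneg:
  fixes p :: real
  assumes "0 \<le> p" "p \<le> 1"
  shows "0 \<le> p ^ a * (1 - p) ^ b"
  using assms by simp

lemma prob_mono:
  assumes "0 \<le> p" "p \<le> 1" and "\<And>E. E \<subseteq> all_pairs n \<Longrightarrow> P E \<Longrightarrow> Q E"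
  shows "prob_Gnp n p P \<le> prob_Gnp n p Q"
  unfolding prob_Gnp_def
  by (rule sum_mono) (use assms in auto)

lemma prob_compl:
  assumes "0 \<le> p" "p \<le> 1"
  shows "prob_Gnp n p P = 1 - prob_Gnp n p (\<lambda>E. \<not> P E)"
proof -
  have "prob_Gnp n p P + prob_Gnp n p (\<lambda>E. \<not> P E) = prob_Gnp n p (\<lambda>_. True)"
    unfolding prob_Gnp_def sum.distrib[symmetric] by (rule sum.cong) auto
  then show ?thesis using prob_total[of n p] by simp
qed

lemma prob_nonneg:
  assumes "0 \<le> p" "p \<le> 1"
  shows "0 \<le> prob_Gnp n p P"
  unfolding prob_Gnp_def by (rule sum_nonneg) (use assms in auto)

lemma prob_le1:
  assumes "0 \<le> p" "p \<le> 1"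
  shows "prob_Gnp n p P \<le> 1"
  using prob_mono[OF assms, of n P "\<lambda>_. True"] prob_total[of n p] by simp

lemma prob_union:
  assumes "0 \<le> p" "p \<le> 1" "finite I"
  shows "prob_Gnp n p (\<lambda>E. \<exists>i\<in>I. Q i E) \<le> (\<Sum>i\<in>I. prob_Gnp n p (Q i))"
proof -
  let ?w = "\<lambda>E. p ^ card E * (1 - p) ^ (card (all_pairs n) - card E)"
  have "prob_Gnp n p (\<lambda>E. \<exists>i\<in>I. Q i E) \<le> (\<Sum>E\<in>Pow (all_pairs n). \<Sum>i\<in>I. if Q i E then ?w E else 0)"
    unfolding prob_Gnp_def
  proof (rule sum_mono)
    fix E assume "E \<in> Pow (all_pairs n)"
    show "(if \<exists>i\<in>I. Q i E then ?w E else 0) \<le> (\<Sum>i\<in>I. if Q i E then ?w E else 0)"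
    proof (cases "\<exists>i\<in>I. Q i E")
      case True
      then obtain i where i: "i \<in> I" "Q i E" by blast
      have "(if Q i E then ?w E else 0) \<le> (\<Sum>i\<in>I. if Q i E then ?w E else 0)"
        by (rule member_le_sum) (use i assms in auto)
      then show ?thesis using True i by simp
    next
      case False
      then show ?thesis using assms by (auto intro!: sum_nonneg)
    qed
  qed
  also have "\<dots> = (\<Sum>i\<in>I. prob_Gnp n p (Q i))"
    unfolding prob_Gnp_def by (rule sum.swap)
  finally show ?thesis .
qed

lemma prob_avoid:
  fixes p :: real
  assumes "F \<subseteq> all_pairs n"
  shows "prob_Gnp n p (\<lambda>E. E \<inter> F = {}) = (1 - p) ^ card F"
proof -
  let ?P = "all_pairs n"
  have fin: "finite ?P" by (rule finite_all_pairs)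
  have finF: "finite F" using assms fin finite_subset by blast
  have cF: "card (?P - F) = card ?P - card F" using assms finF by (simp add: card_Diff_subset)
  have cFle: "card F \<le> card ?P" using assms fin by (simp add: card_mono)
  have "prob_Gnp n p (\<lambda>E. E \<inter> F = {}) = (\<Sum>E\<in>{E\<in>Pow ?P. E \<inter> F = {}}. p ^ card E * (1 - p) ^ (card ?P - card E))"
    unfolding prob_Gnp_def by (rule sum.inter_filter[symmetric]) (simp add: fin)
  also have "{E\<in>Pow ?P. E \<inter> F = {}} = Pow (?P - F)" by auto
  also have "(\<Sum>E\<in>Pow (?P - F). p ^ card E * (1 - p) ^ (card ?P - card E))
     = (\<Sum>E\<in>Pow (?P - F). (1-p)^card F * (p ^ card E * (1 - p) ^ (card (?P - F) - card E)))"
  proof (rule sum.cong)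
    fix E assume E: "E \<in> Pow (?P - F)"
    have "card E \<le> card (?P - F)" using E fin by (simp add: card_mono)
    then have "card ?P - card E = card F + (card (?P - F) - card E)" using cF cFle by linarith
    then show "p ^ card E * (1 - p) ^ (card ?P - card E) = (1-p)^card F * (p ^ card E * (1 - p) ^ (card (?P - F) - card E))"
      by (simp add: power_add)
  qed simp
  also have "\<dots> = (1-p)^card F" 
    by (simp add: sum_distrib_left[symmetric] sum_pow_binom fin)
  finally show ?thesis .
qed

definition eb :: "nat set \<Rightarrow> nat set \<Rightarrow> nat set set" where
  "eb X Y = (\<lambda>(x,y). {x,y}) ` (X \<times> Y)"

lemma eb_sub:
  assumes "X \<subseteq> {0..<n}" "Y \<subseteq> {0..<n}" "X \<inter> Y = {}"
  shows "eb X Y \<subseteq> all_pairs n"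
  using assms unfolding eb_def all_pairs_def by fastforce

lemma eb_card:
  assumes "finite X" "finite Y" "X \<inter> Y = {}"
  shows "card (eb X Y) = card X * card Y"
proof -
  have "inj_on (\<lambda>(x,y). {x,y}) (X \<times> Y)"
    using assms(3) by (auto simp: inj_on_def doubleton_eq_iff)
  then show ?thesis unfolding eb_def by (simp add: card_image card_cartesian_product)
qed

lemma one_minus_pow_le:
  fixes p :: real
  assumes "0 \<le> p" "p \<le> 1"
  shows "(1 - p) ^ k \<le> exp (- p * real k)"
proof -
  have "(1 - p) ^ k \<le> exp (-p) ^ k"
    by (rule power_mono) (use assms exp_ge_add_one_self[of "-p"] in auto)
  also have "\<dots> = exp (- p * real k)" by (simp add: exp_of_nat_mult[symmetric] mult.commute)
  finally show ?thesis .
qed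

lemma prob_no_edge:
  fixes p :: real
  assumes "0 \<le> p" "p \<le> 1" "X \<subseteq> {0..<n}" "Y \<subseteq> {0..<n}" "X \<inter> Y = {}"
  shows "prob_Gnp n p (\<lambda>E. E \<inter> eb X Y = {}) \<le> exp (- p * (real (card X) * real (card Y)))"
proof -
  have fin: "finite X" "finite Y" using assms finite_subset by blast+
  have "prob_Gnp n p (\<lambda>E. E \<inter> eb X Y = {}) = (1 - p) ^ (card X * card Y)"
    using prob_avoid[OF eb_sub[OF assms(3-5)], of p] eb_card[OF fin assms(5)] by simp
  also have "\<dots> \<le> exp (- p * real (card X * card Y))" by (rule one_minus_pow_le[OF assms(1,2)])
  finally show ?thesis by simp
qed

lemma card_small_subsets:
  "card {B. B \<subseteq> {0..<n} \<and> card B \<le> k} \<le> (n+1)^k"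
proof -
  let ?D = "{xs. set xs \<subseteq> {0..n} \<and> length xs = k}"
  have sub: "{B. B \<subseteq> {0..<n} \<and> card B \<le> k} \<subseteq> (\<lambda>xs. set xs - {n}) ` ?D"
  proof
    fix B assume B: "B \<in> {B. B \<subseteq> {0..<n} \<and> card B \<le> k}"
    then have fB: "finite B" using finite_subset by blast
    let ?xs = "sorted_list_of_set B @ replicate (k - card B) n"
    have nB: "n \<notin> B" using B by auto
    have s1: "set (sorted_list_of_set B) = B" using fB by simp
    have s2: "set (replicate (k - card B) n) \<subseteq> {n}" by auto
    have "set ?xs - {n} = B" using nB s1 s2 by auto
    moreover have "set ?xs \<subseteq> {0..n}" using s1 s2 B by auto
    moreover have "length ?xs = k" using B fB by simp
    ultimately show "B \<in> (\<lambda>xs. set xs - {n}) ` ?D" by (metis (mono_tags, lifting) image_eqI mem_Collect_eq)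
  qed
  have "finite ?D" by (rule finite_lists_length_eq) simp
  then have "card {B. B \<subseteq> {0..<n} \<and> card B \<le> k} \<le> card ((\<lambda>xs. set xs - {n}) ` ?D)"
    using sub by (intro card_mono) auto
  also have "\<dots> \<le> card ?D" by (rule card_image_le) (rule finite_lists_length_eq, simp)
  also have "\<dots> = (n+1)^k" by (simp add: card_lists_length_eq)
  finally show ?thesis .
qed

lemma finite_subsets_V: "finite {B. B \<subseteq> {0..<(n::nat)} \<and> P B}"
  by (rule finite_subset[of _ "Pow {0..<n}"]) auto

definition SS :: "nat \<Rightarrow> real \<Rightarrow> nat \<Rightarrow> (nat set \<times> nat set) set" where
  "SS n s a = {A. A \<subseteq> {0..<n} \<and> card A = a} \<times> {B. B \<subseteq> {0..<n} \<and> card B \<le> nat \<lfloor>s * real a\<rfloor>}"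

definition Ag :: "nat \<Rightarrow> real \<Rightarrow> nat set" where
  "Ag n g = {a. 1 \<le> a \<and> a \<le> n \<and> real a \<le> g}"

definition LL :: "nat \<Rightarrow> real \<Rightarrow> (nat set \<times> nat set) set" where
  "LL n l = {(X,Y). X \<subseteq> {0..<n} \<and> Y \<subseteq> {0..<n} \<and> X \<inter> Y = {} \<and> l \<le> real (card X) \<and> l \<le> real (card Y)}"

lemma notS_event:
  assumes "0 \<le> s" "\<not> prop_S n E s g"
  shows "\<exists>a\<in>Ag n g. \<exists>i\<in>SS n s a. E \<inter> eb (fst i) ({0..<n} - fst i - snd i) = {}"
proof -
  obtain A where A: "A \<subseteq> {0..<n}" "real (card A) \<le> g" "real (card (nbhd n E A)) < s * real (card A)"
    using assms(2) unfolding prop_S_def by (auto simp: not_le)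
  let ?B = "nbhd n E A"
  have fA: "finite A" using A(1) finite_subset by blast
  have "A \<noteq> {}" using A(3) by auto
  then have a1: "1 \<le> card A" using fA by (simp add: Suc_le_eq card_gt_0_iff)
  have an: "card A \<le> n" using card_mono[OF _ A(1)] by simp
  have Bsub: "?B \<subseteq> {0..<n}" unfolding nbhd_def by auto
  have "real (card ?B) \<le> real_of_int \<lfloor>s * real (card A)\<rfloor>"
    using A(3) by (metis floor_of_nat less_eq_real_def floor_mono of_int_floor_le of_int_of_nat_eq
        order_trans le_floor_iff)
  then have Bc: "card ?B \<le> nat \<lfloor>s * real (card A)\<rfloor>" by linarith
  have noedge: "E \<inter> eb A ({0..<n} - A - ?B) = {}"
  proof (rule ccontr)
    assume "E \<inter> eb A ({0..<n} - A - ?B) \<noteq> {}"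
    then obtain e where e: "e \<in> E" "e \<in> eb A ({0..<n} - A - ?B)" by blast
    then obtain x y where xy: "x \<in> A" "y \<in> {0..<n} - A - ?B" "{x,y} \<in> E" unfolding eb_def by auto
    then have "y \<in> ?B" unfolding nbhd_def by auto
    then show False using xy by auto
  qed
  have "card A \<in> Ag n g" unfolding Ag_def using a1 an A(2) by auto
  moreover have "(A, ?B) \<in> SS n s (card A)" unfolding SS_def using A(1) Bsub Bc by auto
  ultimately show ?thesis using noedge by (intro bexI[of _ "card A"] bexI[of _ "(A, ?B)"]) auto
qed

lemma notL_event:
  assumes "\<not> prop_L n E l"
  shows "\<exists>i\<in>LL n l. E \<inter> eb (fst i) (snd i) = {}"
proof -
  obtain X Y where XY: "X \<subseteq> {0..<n}" "Y \<subseteq> {0..<n}" "X \<inter> Y = {}" "l \<le> real (card X)" "l \<le> real (card Y)"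
     and ne: "\<not> (\<exists>x\<in>X. \<exists>y\<in>Y. {x, y} \<in> E)"
    using assms unfolding prop_L_def by blast
  have "E \<inter> eb X Y = {}" using ne unfolding eb_def by auto
  moreover have "(X,Y) \<in> LL n l" unfolding LL_def using XY by auto
  ultimately show ?thesis by (intro bexI[of _ "(X,Y)"]) auto
qed

lemma finite_SS: "finite (SS n s a)"
  unfolding SS_def by (intro finite_cartesian_product finite_subsets_V)

lemma card_SS: "card (SS n s a) \<le> (n+1)^a * (n+1)^(nat \<lfloor>s * real a\<rfloor>)"
proof -
  have "card {A. A \<subseteq> {0..<n} \<and> card A = a} \<le> card {A. A \<subseteq> {0..<n} \<and> card A \<le> a}"
    by (rule card_mono[OF finite_subsets_V]) auto
  also have "\<dots> \<le> (n+1)^a" by (rule card_small_subsets)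
  finally have 1: "card {A. A \<subseteq> {0..<n} \<and> card A = a} \<le> (n+1)^a" .
  have 2: "card {B. B \<subseteq> {0..<n} \<and> card B \<le> nat \<lfloor>s * real a\<rfloor>} \<le> (n+1)^(nat \<lfloor>s * real a\<rfloor>)"
    by (rule card_small_subsets)
  show ?thesis unfolding SS_def card_cartesian_product using 1 2 by (rule mult_le_mono)
qed

lemma prob_bad_S:
  fixes p s g :: real
  assumes p: "0 \<le> p" "p \<le> 1" and s8: "8 \<le> s" and g: "g \<le> 4 * real n / (5 * s)"
  shows "prob_Gnp n p (\<lambda>E. \<not> prop_S n E s g)
     \<le> (\<Sum>a\<in>{1..n}. real ((n+1)^a * (n+1)^(nat \<lfloor>s * real a\<rfloor>)) * exp (- p * real a * real n / 10))"
proof -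
  let ?Q = "\<lambda>i E. E \<inter> eb (fst i) ({0..<n} - fst i - snd i) = {}"
  have finAg: "finite (Ag n g)" unfolding Ag_def by (rule finite_subset[of _ "{..n}"]) auto
  have "prob_Gnp n p (\<lambda>E. \<not> prop_S n E s g) \<le> prob_Gnp n p (\<lambda>E. \<exists>a\<in>Ag n g. \<exists>i\<in>SS n s a. ?Q i E)"
    by (rule prob_mono[OF p]) (use notS_event s8 in auto)
  also have "\<dots> \<le> (\<Sum>a\<in>Ag n g. prob_Gnp n p (\<lambda>E. \<exists>i\<in>SS n s a. ?Q i E))"
    by (rule prob_union[OF p finAg])
  also have "\<dots> \<le> (\<Sum>a\<in>Ag n g. real ((n+1)^a * (n+1)^(nat \<lfloor>s * real a\<rfloor>)) * exp (- p * real a * real n / 10))"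
  proof (rule sum_mono)
    fix a assume aA: "a \<in> Ag n g"
    have ag: "real a \<le> g" using aA unfolding Ag_def by auto
    have spos: "0 < s" using s8 by simp
    have sa: "s * real a \<le> 4 * real n / 5"
    proof -
      have "s * real a \<le> s * (4 * real n / (5 * s))" using ag g spos by (intro mult_left_mono) auto
      also have "\<dots> = 4 * real n / 5" using spos by (simp add: field_simps)
      finally show ?thesis .
    qed
    have an: "real a \<le> real n / 10"
    proof -
      have "8 * real a \<le> s * real a" using s8 by (intro mult_right_mono) auto
      then show ?thesis using sa by simp
    qed
    have hterm: "prob_Gnp n p (?Q i) \<le> exp (- p * real a * real n / 10)" if i: "i \<in> SS n s a" for i
    proof -
      obtain A B where AB: "i = (A,B)" by (cases i)
      have A: "A \<subseteq> {0..<n}" "card A = a" and B: "B \<subseteq> {0..<n}" "card B \<le> nat \<lfloor>s * real a\<rfloor>"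
        using i AB unfolding SS_def by auto
      have fA: "finite A" "finite B" using A B finite_subset by blast+
      have cB: "real (card B) \<le> s * real a"
      proof -
        have "real (card B) \<le> real (nat \<lfloor>s * real a\<rfloor>)" using B(2) by linarith
        also have "\<dots> \<le> s * real a" using spos by (simp add: of_nat_nat)
        finally show ?thesis .
      qed
      have "{0..<n} - A - B = {0..<n} - (A \<union> B)" by blast
      then have "card ({0..<n} - A - B) = card ({0..<n} - (A \<union> B))" by simp
      also have "\<dots> = n - card (A \<union> B)" using A B fA by (subst card_Diff_subset) auto
      finally have "real (card ({0..<n} - A - B)) \<ge> real n - real (card (A \<union> B))" by linarith
      moreover have "card (A \<union> B) \<le> card A + card B" by (rule card_Un_le)
      ultimately have cR: "real (card ({0..<n} - A - B)) \<ge> real n / 10" using cB an sa A(2) by linarith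
      have "prob_Gnp n p (?Q i) \<le> exp (- p * (real (card A) * real (card ({0..<n} - A - B))))"
        using prob_no_edge[OF p A(1), of "{0..<n} - A - B"] AB by auto
      also have "\<dots> \<le> exp (- p * real a * real n / 10)"
      proof -
        have "real a * (real n / 10) \<le> real a * real (card ({0..<n} - A - B))"
          using cR by (intro mult_left_mono) auto
        then have "p * (real a * real n / 10) \<le> p * (real (card A) * real (card ({0..<n} - A - B)))"
          using p A(2) by (intro mult_left_mono) auto
        then show ?thesis by simp
      qed
      finally show ?thesis .
    qed
    have "prob_Gnp n p (\<lambda>E. \<exists>i\<in>SS n s a. ?Q i E) \<le> (\<Sum>i\<in>SS n s a. prob_Gnp n p (?Q i))"
      by (rule prob_union[OF p finite_SS])
    also have "\<dots> \<le> (\<Sum>i\<in>SS n s a. exp (- p * real a * real n / 10))"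
      by (rule sum_mono) (rule hterm)
    also have "\<dots> = real (card (SS n s a)) * exp (- p * real a * real n / 10)" by simp
    also have "\<dots> \<le> real ((n+1)^a * (n+1)^(nat \<lfloor>s * real a\<rfloor>)) * exp (- p * real a * real n / 10)"
      by (intro mult_right_mono) (use card_SS[of n s a] in \<open>simp_all only: of_nat_le_iff exp_ge_zero\<close>)
    finally show "prob_Gnp n p (\<lambda>E. \<exists>i\<in>SS n s a. ?Q i E) \<le> real ((n+1)^a * (n+1)^(nat \<lfloor>s * real a\<rfloor>)) * exp (- p * real a * real n / 10)" .
  qed
  also have "\<dots> \<le> (\<Sum>a\<in>{1..n}. real ((n+1)^a * (n+1)^(nat \<lfloor>s * real a\<rfloor>)) * exp (- p * real a * real n / 10))"
    by (rule sum_mono2) (auto simp: Ag_def)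
  finally show ?thesis .
qed

lemma prob_bad_L:
  fixes p l :: real
  assumes p: "0 \<le> p" "p \<le> 1" and l: "0 < l"
  shows "prob_Gnp n p (\<lambda>E. \<not> prop_L n E l) \<le> 4 ^ n * exp (- p * l^2)"
proof -
  let ?Q = "\<lambda>i E. E \<inter> eb (fst i) (snd i) = {}"
  have sub: "LL n l \<subseteq> Pow {0..<n} \<times> Pow {0..<n}" unfolding LL_def by auto
  have finL: "finite (LL n l)" by (rule finite_subset[OF sub]) auto
  have cL: "card (LL n l) \<le> 4 ^ n"
  proof -
    have "card (LL n l) \<le> card (Pow {0..<n} \<times> Pow {0..<n})" by (rule card_mono[OF _ sub]) auto
    also have "\<dots> = 2^n * 2^n" by (simp add: card_cartesian_product card_Pow)
    also have "\<dots> = 4^n" by (simp add: power_mult_distrib[symmetric])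
    finally show ?thesis .
  qed
  have "prob_Gnp n p (\<lambda>E. \<not> prop_L n E l) \<le> prob_Gnp n p (\<lambda>E. \<exists>i\<in>LL n l. ?Q i E)"
    by (rule prob_mono[OF p]) (use notL_event in auto)
  also have "\<dots> \<le> (\<Sum>i\<in>LL n l. prob_Gnp n p (?Q i))" by (rule prob_union[OF p finL])
  also have "\<dots> \<le> (\<Sum>i\<in>LL n l. exp (- p * l^2))"
  proof (rule sum_mono)
    fix i assume i: "i \<in> LL n l"
    obtain X Y where XY: "i = (X,Y)" by (cases i)
    have X: "X \<subseteq> {0..<n}" "Y \<subseteq> {0..<n}" "X \<inter> Y = {}" "l \<le> real (card X)" "l \<le> real (card Y)"
      using i XY unfolding LL_def by auto
    have "l^2 \<le> real (card X) * real (card Y)" unfolding power2_eq_square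
      using X(4,5) l by (intro mult_mono) auto
    then have "p * l^2 \<le> p * (real (card X) * real (card Y))" using p by (intro mult_left_mono) auto
    then have "exp (- p * (real (card X) * real (card Y))) \<le> exp (- p * l^2)" by simp
    then show "prob_Gnp n p (?Q i) \<le> exp (- p * l^2)"
      using prob_no_edge[OF p X(1-3)] XY by (auto intro: order_trans)
  qed
  also have "\<dots> = real (card (LL n l)) * exp (- p * l^2)" by simp
  also have "\<dots> \<le> 4 ^ n * exp (- p * l^2)"
  proof -
    have "real (card (LL n l)) \<le> 4 ^ n" using cL by (metis of_nat_le_iff of_nat_numeral of_nat_power)
    then show ?thesis by (intro mult_right_mono) auto
  qed
  finally show ?thesis .
qed

lemma prob_or:
  assumes "0 \<le> p" "p \<le> 1"
  shows "prob_Gnp n p (\<lambda>E. P E \<or> Q E) \<le> prob_Gnp n p P + prob_Gnp n p Q"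
  unfolding prob_Gnp_def sum.distrib[symmetric]
  by (rule sum_mono) (use assms in auto)

lemma real_pow_exp: "real ((n+1)^m) = exp (real m * ln (real n + 1))"
proof -
  have "exp (real m * ln (real n + 1)) = exp (ln (real n + 1)) ^ m" by (rule exp_of_nat_mult)
  also have "\<dots> = (real n + 1) ^ m" by simp
  finally show ?thesis by (simp add: add.commute)
qed

lemma sumS_bound:
  fixes p s :: real
  assumes p: "0 \<le> p" and s8: "8 \<le> s" and s5: "s^5 = real n * p"
    and cond: "(1 + s) * ln (real n + 1) \<le> s^5 / 20"
  shows "(\<Sum>a\<in>{1..n}. real ((n+1)^a * (n+1)^(nat \<lfloor>s * real a\<rfloor>)) * exp (- p * real a * real n / 10))
         \<le> real n * exp (- (s^5) / 20)"
proof -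
  have "(\<Sum>a\<in>{1..n}. real ((n+1)^a * (n+1)^(nat \<lfloor>s * real a\<rfloor>)) * exp (- p * real a * real n / 10))
     \<le> (\<Sum>a\<in>{1..n}. exp (- (s^5) / 20))"
  proof (rule sum_mono)
    fix a assume a: "a \<in> {1..n}"
    let ?k = "nat \<lfloor>s * real a\<rfloor>"
    have L0: "0 \<le> ln (real n + 1)" by simp
    have k: "real ?k \<le> s * real a" using s8 by (simp add: of_nat_nat)
    have "real ((n+1)^a * (n+1)^?k) = real ((n+1)^(a + ?k))" by (simp add: power_add)
    also have "\<dots> = exp (real (a + ?k) * ln (real n + 1))" by (rule real_pow_exp)
    also have "\<dots> \<le> exp ((real a + s * real a) * ln (real n + 1))"
      using k L0 by (intro exp_mono mult_right_mono) auto
    finally have 1: "real ((n+1)^a * (n+1)^?k) \<le> exp ((real a + s * real a) * ln (real n + 1))" .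
    have 2: "p * real a * real n / 10 = real a * s^5 / 10" using s5 by (simp add: field_simps)
    have "(real a + s * real a) * ln (real n + 1) = real a * ((1 + s) * ln (real n + 1))" by (simp add: algebra_simps)
    also have "\<dots> \<le> real a * (s^5 / 20)" using cond by (intro mult_left_mono) auto
    finally have 3: "(real a + s * real a) * ln (real n + 1) - real a * s^5 / 10 \<le> - (real a * (s^5 / 20))" by simp
    have s50: "0 \<le> s^5" using s8 by simp
    have a1: "1 \<le> real a" using a by simp
    have 4: "s^5 / 20 \<le> real a * (s^5 / 20)" using mult_right_mono[OF a1, of "s^5/20"] s50 by simp
    have "real ((n+1)^a * (n+1)^?k) * exp (- p * real a * real n / 10)
        \<le> exp ((real a + s * real a) * ln (real n + 1)) * exp (- p * real a * real n / 10)"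
      using 1 by (intro mult_right_mono) auto
    also have "\<dots> = exp ((real a + s * real a) * ln (real n + 1) - real a * s^5 / 10)"
      using 2 by (simp add: exp_add[symmetric] exp_diff)
    also have "\<dots> \<le> exp (- (s^5) / 20)" using 3 4 by simp
    finally show "real ((n+1)^a * (n+1)^?k) * exp (- p * real a * real n / 10) \<le> exp (- (s^5) / 20)" .
  qed
  also have "\<dots> = real n * exp (- (s^5) / 20)" by simp
  finally show ?thesis .
qed

lemma ev_powr:
  fixes \<gamma> M :: real
  assumes "0 < \<gamma>"
  shows "eventually (\<lambda>n. M \<le> real n powr \<gamma>) sequentially"
proof (rule eventually_sequentiallyI)
  let ?M = "max M 1"
  fix n :: nat assume n: "nat \<lceil>?M powr (1/\<gamma>)\<rceil> \<le> n"
  have "?M powr (1/\<gamma>) \<le> real n" using n by linarith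
  then have "(?M powr (1/\<gamma>)) powr \<gamma> \<le> real n powr \<gamma>"
    using assms by (intro powr_mono2) auto
  also have "(?M powr (1/\<gamma>)) powr \<gamma> = ?M" using assms by (simp add: powr_powr)
  finally show "M \<le> real n powr \<gamma>" by linarith
qed

lemma aux20: "20 * a \<le> b \<Longrightarrow> a \<le> b / (20::real)" by simp
lemma aux_lin: "a + v \<le> b \<Longrightarrow> c \<le> a \<Longrightarrow> c - b \<le> - (v::real)" by simp

lemma per_n:
  fixes \<alpha> q :: real and n :: nat
  assumes a0: "0 < \<alpha>" and a1: "\<alpha> < 1" and q1: "q \<le> 1" and qlow: "real n powr (\<alpha> - 1) \<le> q"
    and n2: "2 \<le> n"
    and E2: "8^5 \<le> real n powr \<alpha>"
    and E3: "80 / (2*\<alpha>/5) \<le> real n powr (2*\<alpha>/5)"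
    and E4: "20 * (2/\<alpha> + 1) \<le> real n powr (\<alpha>/2)"
    and E5: "(ln 4 + 1) / (\<alpha>/15000)^2 \<le> real n powr \<alpha>"
  shows "1 - 2 * real n powr (-(\<alpha>/2)) \<le> prob_Gnp n q (\<lambda>E. is_expander n E (root 5 (real n * q)))"
proof -
  define x where "x = real n"
  have x2: "2 \<le> x" using n2 unfolding x_def by simp
  have x0: "0 < x" using x2 by simp
  have "0 < x powr (\<alpha> - 1)" using x0 by simp
  then have q0: "0 < q" using qlow unfolding x_def by linarith
  have xa: "x powr \<alpha> = x * x powr (\<alpha> - 1)" using x0 by (simp add: powr_mult_base)
  have nqa: "x powr \<alpha> \<le> x * q" unfolding xa using qlow x0 unfolding x_def by simp
  have nqx: "x * q \<le> x" using q1 x0 by simp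
  have xq0: "0 < x * q" using x0 q0 by simp
  define s where "s = root 5 (x * q)"
  have s5: "s^5 = x * q" unfolding s_def using xq0 by simp
  define t where "t = x powr (\<alpha>/5)"
  have t0: "0 \<le> t" unfolding t_def by simp
  have t5: "t^5 = x powr \<alpha>" unfolding t_def using x0 by (simp add: powr_power)
  have s0: "0 \<le> s" unfolding s_def using xq0 by simp
  have st: "t \<le> s" using power_le_imp_le_base[of t 4 s] t5 s5 nqa s0 by (simp add: numeral_eq_Suc)
  have s8: "8 \<le> s" using power_le_imp_le_base[of 8 4 s] E2 nqa s5 s0 unfolding x_def[symmetric]
    by (simp add: numeral_eq_Suc)
  have lx: "0 < ln x" using x2 by simp
  have lns: "ln s = ln (x * q) / 5" unfolding s_def using xq0 by (simp add: ln_root)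
  have l1: "ln (x * q) \<le> ln x" using nqx xq0 by simp
  have l2: "\<alpha> * ln x \<le> ln (x * q)"
  proof -
    have "ln (x powr \<alpha>) \<le> ln (x * q)" using nqa x0 xq0 ln_le_cancel_iff[of "x powr \<alpha>" "x * q"] by simp
    then show ?thesis using x0 by (simp add: ln_powr)
  qed
  have spos: "0 < s" using s8 by simp
  define g where "g = 4 * x * ln s / (s * ln x)"
  have g: "g \<le> 4 * x / (5 * s)"
  proof -
    have "4 * x * ln s \<le> 4 * x * (ln x / 5)" using lns l1 x0 by (intro mult_left_mono) auto
    then have "g \<le> (4 * x * (ln x / 5)) / (s * ln x)" unfolding g_def
      using spos lx by (intro divide_right_mono) auto
    also have "\<dots> = 4 * x / (5 * s)" using lx spos by (simp add: field_simps)
    finally show ?thesis .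
  qed
  define l where "l = x * ln s / (3000 * ln x)"
  have l: "\<alpha> * x / 15000 \<le> l"
  proof -
    have "x * (\<alpha> * ln x / 5) \<le> x * ln s" using lns l2 x0 by (intro mult_left_mono) auto
    then have "(x * (\<alpha> * ln x / 5)) / (3000 * ln x) \<le> l" unfolding l_def
      using lx by (intro divide_right_mono) auto
    moreover have "(x * (\<alpha> * ln x / 5)) / (3000 * ln x) = \<alpha> * x / 15000" using lx by (simp add: field_simps)
    ultimately show ?thesis by simp
  qed
  have lpos: "0 < l" using l a0 x0 by (smt (verit) divide_pos_pos mult_pos_pos)
  define \<beta> where "\<beta> = 2*\<alpha>/5"
  have b0: "0 < \<beta>" and b1: "\<beta> \<le> 1" using a0 a1 unfolding \<beta>_def by auto
  define u where "u = x powr \<beta>"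
  have u0: "0 \<le> u" unfolding u_def by simp
  have E3': "80 / \<beta> \<le> u" using E3 unfolding u_def \<beta>_def x_def by simp
  have lnx1: "ln (x + 1) \<le> 2 * u / \<beta>"
  proof -
    have "ln (x + 1) \<le> (x + 1) powr \<beta> / \<beta>" using x0 b0 by (intro ln_powr_bound) auto
    also have "(x + 1) powr \<beta> \<le> (2 * x) powr \<beta>" using x2 b0 by (intro powr_mono2) auto
    also have "(2 * x) powr \<beta> = 2 powr \<beta> * u" unfolding u_def using x0 by (simp add: powr_mult)
    also have "2 powr \<beta> \<le> 2 powr 1" using b1 by (intro powr_mono) auto
    finally show ?thesis using b0 u0 by (simp add: divide_right_mono mult_right_mono)
  qed
  have t4: "t^4 = u * u"
  proof -
    have "t^4 = x powr (4 * (\<alpha>/5))" unfolding t_def using x0 by (simp add: powr_power)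
    also have "\<dots> = x powr (\<beta> + \<beta>)" unfolding \<beta>_def by (simp add: field_simps)
    also have "\<dots> = u * u" unfolding u_def by (rule powr_add)
    finally show ?thesis .
  qed
  have "40 * ln (x + 1) \<le> 80 * u / \<beta>" using lnx1 by simp
  also have "\<dots> = (80 / \<beta>) * u" by simp
  also have "\<dots> \<le> u * u" using E3' u0 by (intro mult_right_mono) auto
  also have "\<dots> \<le> s^4" unfolding t4[symmetric] using st t0 by (intro power_mono) auto
  finally have ls4: "40 * ln (x + 1) \<le> s^4" .
  have cond: "(1 + s) * ln (x + 1) \<le> s^5 / 20"
  proof -
    have L0: "0 \<le> ln (x + 1)" using x0 by simp
    have "(1 + s) * ln (x + 1) \<le> (2 * s) * ln (x + 1)" using s8 L0 by (intro mult_right_mono) auto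
    also have "\<dots> = s * (40 * ln (x + 1)) / 20" by simp
    also have "\<dots> \<le> s * s^4 / 20" using ls4 s0 by (intro divide_right_mono mult_left_mono) auto
    also have "\<dots> = s^5 / 20" by (simp add: power_Suc[symmetric] del: power_Suc)
    finally show ?thesis .
  qed
  have q01: "0 \<le> q" "q \<le> 1" using q0 q1 by auto
  have PS: "prob_Gnp n q (\<lambda>E. \<not> prop_S n E s g) \<le> x * exp (- (s^5) / 20)"
    using order_trans[OF prob_bad_S[OF q01 s8 g[unfolded x_def]] sumS_bound[OF q01(1) s8 s5[unfolded x_def] cond[unfolded x_def]]]
    unfolding x_def by simp
  define v where "v = x powr (\<alpha>/2)"
  have v0: "0 < v" unfolding v_def using x0 by simp
  have v2: "v * v = x powr \<alpha>" unfolding v_def powr_add[symmetric] by simp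
  have lnxv: "ln x \<le> 2 * v / \<alpha>"
  proof -
    have "ln x \<le> v / (\<alpha>/2)" using ln_powr_bound[of x "\<alpha>/2"] x2 a0 unfolding v_def by simp
    also have "v / (\<alpha>/2) = 2 * v / \<alpha>" by simp
    finally show ?thesis .
  qed
  have E4': "20 * (2/\<alpha> + 1) \<le> v" using E4 unfolding v_def x_def by simp
  have vs: "v * v \<le> s^5" unfolding v2 s5 by (rule nqa)
  have "- (s^5) / 20 \<le> - (v * v) / 20" using vs by (intro divide_right_mono) auto
  then have "exp (- (s^5) / 20) \<le> exp (- (v * v) / 20)" by (rule exp_mono)
  then have "x * exp (- (s^5) / 20) \<le> x * exp (- (v * v) / 20)"
    by (rule mult_left_mono) (use x0 in linarith)
  also have "x * exp (- (v * v) / 20) = exp (ln x - v * v / 20)"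
  proof -
    have "exp (ln x - v * v / 20) = exp (ln x) * exp (- (v * v) / 20)"
      by (simp only: exp_add[symmetric]) (simp add: algebra_simps)
    then show ?thesis using x0 by simp
  qed
  also have "\<dots> \<le> exp (- v)"
  proof -
    have h1: "v * (20 * (2/\<alpha> + 1)) \<le> v * v" using E4' v0 by (intro mult_left_mono) auto
    have h2: "v * (20 * (2/\<alpha> + 1)) = 20 * (2 * v / \<alpha> + v)" using a0 by (simp add: field_simps)
    have h4: "20 * (2 * v / \<alpha> + v) \<le> v * v" using h1 unfolding h2 .
    have h3: "2 * v / \<alpha> + v \<le> v * v / 20" by (rule aux20[OF h4])
    have "ln x - v * v / 20 \<le> - v" by (rule aux_lin[OF h3 lnxv])
    then show ?thesis by (rule exp_mono)
  qed
  also have "\<dots> \<le> 1 / v"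
  proof -
    have "v \<le> exp v" using exp_ge_add_one_self[of v] by linarith
    then have "1 / exp v \<le> 1 / v" using v0 by (intro divide_left_mono) auto
    then show ?thesis by (simp add: exp_minus inverse_eq_divide)
  qed
  also have "\<dots> = x powr (-(\<alpha>/2))" unfolding v_def by (simp add: powr_minus_divide)
  finally have PS': "prob_Gnp n q (\<lambda>E. \<not> prop_S n E s g) \<le> x powr (-(\<alpha>/2))" using PS by simp
  define c where "c = (\<alpha>/15000)^2"
  have c0: "0 < c" unfolding c_def using a0 by simp
  have PL: "prob_Gnp n q (\<lambda>E. \<not> prop_L n E l) \<le> 4 ^ n * exp (- q * l^2)"
    by (rule prob_bad_L[OF q01 lpos])
  have ql: "c * x * x powr \<alpha> \<le> q * l^2"
  proof -
    have "(\<alpha> * x / 15000)^2 \<le> l^2" using l a0 x0 by (intro power_mono) auto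
    then have "x powr (\<alpha> - 1) * (\<alpha> * x / 15000)^2 \<le> q * l^2"
      using qlow q0 unfolding x_def[symmetric] by (intro mult_mono) auto
    moreover have "x powr (\<alpha> - 1) * (\<alpha> * x / 15000)^2 = c * x * (x * x powr (\<alpha> - 1))"
      unfolding c_def by (simp add: power2_eq_square field_simps)
    ultimately show ?thesis unfolding xa by simp
  qed
  have E5': "ln 4 + 1 \<le> c * x powr \<alpha>" using E5 c0 unfolding c_def[symmetric] x_def[symmetric]
    by (simp add: pos_divide_le_eq mult.commute)
  have "4 ^ n * exp (- q * l^2) = exp (x * ln 4 - q * l^2)"
  proof -
    have "(4::real) ^ n = exp (x * ln 4)" unfolding x_def using exp_of_nat_mult[of n "ln (4::real)"] by simp
    then show ?thesis by (simp add: exp_diff exp_minus field_simps)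
  qed
  also have "\<dots> \<le> exp (- x)"
  proof -
    have "x * (ln 4 + 1) \<le> x * (c * x powr \<alpha>)" using E5' x0 by (intro mult_left_mono) auto
    then show ?thesis using ql by (simp add: algebra_simps)
  qed
  also have "\<dots> \<le> 1 / x"
  proof -
    have "x \<le> exp x" using exp_ge_add_one_self[of x] by linarith
    then have "1 / exp x \<le> 1 / x" using x0 by (intro divide_left_mono) auto
    then show ?thesis by (simp add: exp_minus field_simps)
  qed
  also have "\<dots> = x powr (-1)" using x0 by (simp add: powr_minus_divide)
  also have "\<dots> \<le> x powr (-(\<alpha>/2))" using x2 a1 by (intro powr_mono) auto
  finally have PL': "prob_Gnp n q (\<lambda>E. \<not> prop_L n E l) \<le> x powr (-(\<alpha>/2))" using PL by simp
  have "prob_Gnp n q (\<lambda>E. \<not> is_expander n E s) \<le> prob_Gnp n q (\<lambda>E. \<not> prop_S n E s g \<or> \<not> prop_L n E l)"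
    by (rule prob_mono[OF q01]) (simp add: is_expander_def g_def l_def x_def)
  also have "\<dots> \<le> prob_Gnp n q (\<lambda>E. \<not> prop_S n E s g) + prob_Gnp n q (\<lambda>E. \<not> prop_L n E l)"
    by (rule prob_or[OF q01])
  finally have "prob_Gnp n q (\<lambda>E. \<not> is_expander n E s) \<le> 2 * x powr (-(\<alpha>/2))" using PS' PL' by simp
  then show ?thesis using prob_compl[OF q01, of n "\<lambda>E. is_expander n E s"]
    unfolding s_def x_def by simp
qed

theorem lemma3p1:
  fixes \<alpha> :: real and p :: "nat \<Rightarrow> real"
  assumes "0 < \<alpha>" and "\<alpha> < 1"
    and "\<And>n. p n \<le> 1"
    and "\<And>n. p n \<ge> real n powr (\<alpha> - 1)"
  shows "(\<lambda>n. prob_Gnp n (p n) (\<lambda>E. is_expander n E (root 5 (real n * p n)))) \<longlonglongrightarrow> 1"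
proof (rule tendsto_sandwich[of "\<lambda>n. 1 - 2 * real n powr (-(\<alpha>/2))" _ _ "\<lambda>_. 1"])
  have ev: "eventually (\<lambda>n. 2 \<le> n \<and> 8^5 \<le> real n powr \<alpha> \<and> 80 / (2*\<alpha>/5) \<le> real n powr (2*\<alpha>/5)
     \<and> 20 * (2/\<alpha> + 1) \<le> real n powr (\<alpha>/2) \<and> (ln 4 + 1) / (\<alpha>/15000)^2 \<le> real n powr \<alpha>) sequentially"
    using assms(1)
    by (intro eventually_conj eventually_ge_at_top ev_powr) auto
  show "eventually (\<lambda>n. 1 - 2 * real n powr (-(\<alpha>/2)) \<le> prob_Gnp n (p n) (\<lambda>E. is_expander n E (root 5 (real n * p n)))) sequentially"
    using ev by eventually_elim (use per_n[OF assms(1,2) assms(3) assms(4)] in blast)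
  have p01: "0 \<le> p n" for n using assms(4)[of n] by (smt (verit) powr_ge_zero)
  show "eventually (\<lambda>n. prob_Gnp n (p n) (\<lambda>E. is_expander n E (root 5 (real n * p n))) \<le> 1) sequentially"
    using prob_le1[OF p01 assms(3)] by simp
  show "(\<lambda>_. 1) \<longlonglongrightarrow> (1::real)" by simp
  have "(\<lambda>n. real n powr (-(\<alpha>/2))) \<longlonglongrightarrow> 0"
    by (rule tendsto_neg_powr) (use assms(1) filterlim_real_sequentially in auto)
  then have "(\<lambda>n. 1 - 2 * real n powr (-(\<alpha>/2))) \<longlonglongrightarrow> 1 - 2 * 0"
    by (intro tendsto_intros)
  then show "(\<lambda>n. 1 - 2 * real n powr (-(\<alpha>/2))) \<longlonglongrightarrow> 1" by simp
qed

end
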